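(* Let $X$ and $Y$ be spaces with $X$ compact Hausdorff and let $U$ be an unbased space. Then for every $s\ge0$ the homomorphism $\langle\Xi^U\rangle\colon\langle Y^X\rangle\to\langle (Y^X)^{(U)}\rangle$ maps $\langle Y^X\rangle^{(s)}$ into $\langle (Y^X)^{(U)}\rangle^{(s)}_X$.
   Context: Spaces and maps are based unless called unbased. $\langle W\rangle$ = free abelian group on a set $W$; functions induce homomorphisms $\langle f\rangle$. $Y^X$ = based maps $X\to Y$ (compact-open topology). For $R\subseteq Z$ containing the basepoint, $V\mapsto V|_R$ is induced by restriction. $\mathcal F_n(Z)$ = finite subsets of $Z$ containing the basepoint with at most $n+1$ elements; $\langle Y^Z\rangle^{(s)}=\{V: V|_R=0\ \forall R\in\mathcal F_{s-1}(Z)\}$. $(Y^X)^{(U)}$ is the set of unbased maps $U\to Y^X$; $\Xi^U\colon Y^X\to (Y^X)^{(U)}$ sends $d$ to the constant map at $d$. With $x_0$ the basepoint of $X$, $U\wr X=(U\times X)/(U\times\{x_0\})$ (based at the collapsed set), $\#^X\colon(Y^X)^{(U)}\to Y^{U\wr X}$, $\#^X(w)(u\wr x)=w(u)(x)$, and $\langle (Y^X)^{(U)}\rangle^{(s)}_X=\langle\#^X\rangle^{-1}(\langle Y^{U\wr X}\rangle^{(s)})$. *)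

theory Defs
  imports "HOL-Analysis.Analysis" "HOL-Algebra.Free_Abelian_Groups"
begin

text \<open>A based space is a topology together with a basepoint in its carrier.
  Maps are represented extensionally (restricted to the carrier), so that
  distinct HOL functions give distinct maps.\<close>

definition based_maps :: "'a topology \<Rightarrow> 'a \<Rightarrow> 'b topology \<Rightarrow> 'b \<Rightarrow> ('a \<Rightarrow> 'b) set" where
  "based_maps X x0 Y y0 =
     {f. continuous_map X Y f \<and> f x0 = y0 \<and> f \<in> extensional (topspace X)}"

definition compact_open :: "'a topology \<Rightarrow> 'a \<Rightarrow> 'b topology \<Rightarrow> 'b \<Rightarrow> ('a \<Rightarrow> 'b) topology" where
  "compact_open X x0 Y y0 =
     topology_generated_by
       {{f \<in> based_maps X x0 Y y0. f ` K \<subseteq> W} | K W. compactin X K \<and> openin Y W}"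

definition unbased_maps_into :: "'c topology \<Rightarrow> 'a topology \<Rightarrow> 'a \<Rightarrow> 'b topology \<Rightarrow> 'b
    \<Rightarrow> ('c \<Rightarrow> 'a \<Rightarrow> 'b) set" where
  "unbased_maps_into U X x0 Y y0 =
     {w. continuous_map U (compact_open X x0 Y y0) w \<and> w \<in> extensional (topspace U)}"

definition Xi :: "'c topology \<Rightarrow> ('a \<Rightarrow> 'b) \<Rightarrow> ('c \<Rightarrow> 'a \<Rightarrow> 'b)" where
  "Xi U d = (\<lambda>u\<in>topspace U. d)"

text \<open>The wreath space U wr X = (U x X)/(U x {x0}); the collapsed set is the point None,
  the class of (u,x) with x ~= x0 is Some (u,x).  Its basepoint is None.\<close>
definition wr_quot :: "'a \<Rightarrow> 'c \<times> 'a \<Rightarrow> ('c \<times> 'a) option" where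
  "wr_quot x0 p = (if snd p = x0 then None else Some p)"

definition wr_space :: "'c topology \<Rightarrow> 'a topology \<Rightarrow> 'a \<Rightarrow> ('c \<times> 'a) option topology" where
  "wr_space U X x0 =
     topology (\<lambda>S. S \<subseteq> insert None (wr_quot x0 ` topspace (prod_topology U X)) \<and>
                  openin (prod_topology U X)
                    {p \<in> topspace (prod_topology U X). wr_quot x0 p \<in> S})"

definition sharp :: "'c topology \<Rightarrow> 'a topology \<Rightarrow> 'a \<Rightarrow> 'b \<Rightarrow> ('c \<Rightarrow> 'a \<Rightarrow> 'b)
    \<Rightarrow> ('c \<times> 'a) option \<Rightarrow> 'b" where
  "sharp U X x0 y0 w =
     (\<lambda>z\<in>topspace (wr_space U X x0).
        (case z of None \<Rightarrow> y0 | Some (u, x) \<Rightarrow> w u x))"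

definition free_hom :: "('a \<Rightarrow> 'b) \<Rightarrow> ('a \<Rightarrow>\<^sub>0 int) \<Rightarrow> ('b \<Rightarrow>\<^sub>0 int)" where
  "free_hom f = frag_extend (\<lambda>w. frag_of (f w))"

text \<open>F_n(Z) (n an integer, so that F_{-1} is empty).\<close>
definition Fsets :: "'a topology \<Rightarrow> 'a \<Rightarrow> int \<Rightarrow> 'a set set" where
  "Fsets Z z0 n = {R. finite R \<and> R \<subseteq> topspace Z \<and> z0 \<in> R \<and> int (card R) \<le> n + 1}"

definition filt :: "'a topology \<Rightarrow> 'a \<Rightarrow> 'b topology \<Rightarrow> 'b \<Rightarrow> nat \<Rightarrow> (('a \<Rightarrow> 'b) \<Rightarrow>\<^sub>0 int) set" where
  "filt Z z0 Y y0 s =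
     {V \<in> carrier (free_Abelian_group (based_maps Z z0 Y y0)).
        \<forall>R \<in> Fsets Z z0 (int s - 1). free_hom (\<lambda>d. restrict d R) V = 0}"

definition filt_U :: "'c topology \<Rightarrow> 'a topology \<Rightarrow> 'a \<Rightarrow> 'b topology \<Rightarrow> 'b \<Rightarrow> nat
    \<Rightarrow> (('c \<Rightarrow> 'a \<Rightarrow> 'b) \<Rightarrow>\<^sub>0 int) set" where
  "filt_U U X x0 Y y0 s =
     {W \<in> carrier (free_Abelian_group (unbased_maps_into U X x0 Y y0)).
        free_hom (sharp U X x0 y0) W \<in> filt (wr_space U X x0) None Y y0 s}"

end

theory Submission
  imports Defs
begin

lemma free_hom_comp: "free_hom g (free_hom f c) = free_hom (g \<circ> f) c"
  unfolding free_hom_def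
  using frag_extend_compose[of "\<lambda>w. frag_of (g w)" f c]
  by (simp add: comp_def)

lemma free_hom_keys: "Poly_Mapping.keys (free_hom f c) \<subseteq> f ` Poly_Mapping.keys c"
  unfolding free_hom_def using keys_frag_extend[of "\<lambda>w. frag_of (f w)" c] by auto

lemma free_hom_cong: "(\<And>x. x \<in> Poly_Mapping.keys c \<Longrightarrow> f x = g x) \<Longrightarrow> free_hom f c = free_hom g c"
  unfolding free_hom_def by (rule frag_extend_eq) simp

lemma free_hom_zero [simp]: "free_hom f 0 = 0"
  unfolding free_hom_def by simp

lemma gen_istop: "istopology (\<lambda>S. S \<subseteq> A \<and> openin P {p \<in> topspace P. q p \<in> S})"
proof -
  have 1: "{p \<in> topspace P. q p \<in> S \<inter> T} = {p \<in> topspace P. q p \<in> S} \<inter> {p \<in> topspace P. q p \<in> T}" for S T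
    by auto
  have 2: "{p \<in> topspace P. q p \<in> \<Union>K} = (\<Union>S\<in>K. {p \<in> topspace P. q p \<in> S})" for K
    by auto
  show ?thesis unfolding istopology_def 1 2 by (auto intro!: openin_Int openin_Union)
qed

lemma openin_wr:
  "openin (wr_space U X x0) S \<longleftrightarrow> S \<subseteq> insert None (wr_quot x0 ` topspace (prod_topology U X)) \<and>
                  openin (prod_topology U X)
                    {p \<in> topspace (prod_topology U X). wr_quot x0 p \<in> S}"
  unfolding wr_space_def topology_inverse'[OF gen_istop] by (rule refl)

lemma topspace_wr:
  "topspace (wr_space U X x0) = insert None (wr_quot x0 ` topspace (prod_topology U X))"
proof
  show "topspace (wr_space U X x0) \<subseteq> insert None (wr_quot x0 ` topspace (prod_topology U X))"
    using openin_wr[of U X x0 "topspace (wr_space U X x0)"] by simp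
  have "{p \<in> topspace (prod_topology U X). wr_quot x0 p \<in> insert None (wr_quot x0 ` topspace (prod_topology U X))}
      = topspace (prod_topology U X)" by auto
  then have "openin (prod_topology U X) {p \<in> topspace (prod_topology U X). wr_quot x0 p \<in> insert None (wr_quot x0 ` topspace (prod_topology U X))}"
    by (metis openin_topspace)
  then have "openin (wr_space U X x0) (insert None (wr_quot x0 ` topspace (prod_topology U X)))"
    unfolding openin_wr by simp
  then show "insert None (wr_quot x0 ` topspace (prod_topology U X)) \<subseteq> topspace (wr_space U X x0)"
    by (rule openin_subset)
qed

lemma Some_in_wr:
  assumes "Some (u, x) \<in> topspace (wr_space U X x0)"
  shows "u \<in> topspace U" "x \<in> topspace X" "x \<noteq> x0"
  using assms unfolding topspace_wr wr_quot_def by (auto split: if_splits)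

lemma sharp_Xi:
  assumes "z \<in> topspace (wr_space U X x0)"
  shows "sharp U X x0 y0 (Xi U d) z = (case z of None \<Rightarrow> y0 | Some (u, x) \<Rightarrow> d x)"
  using assms Some_in_wr[of _ _ U X x0]
  by (auto simp: sharp_def Xi_def split: option.splits)

lemma sharp_Xi_quot:
  assumes "p \<in> topspace (prod_topology U X)" "d x0 = y0"
  shows "sharp U X x0 y0 (Xi U d) (wr_quot x0 p) = d (snd p)"
proof -
  have "wr_quot x0 p \<in> topspace (wr_space U X x0)" unfolding topspace_wr using assms(1) by blast
  then show ?thesis using assms by (auto simp: sharp_Xi wr_quot_def split: prod.splits)
qed

lemma topspace_co: "topspace (compact_open X x0 Y y0) = based_maps X x0 Y y0"
proof -
  have "based_maps X x0 Y y0 \<subseteq> \<Union>{{f \<in> based_maps X x0 Y y0. f ` K \<subseteq> W} | K W. compactin X K \<and> openin Y W}"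
    by (rule Union_upper[THEN subset_trans[rotated]], rule CollectI, rule exI[of _ "{}"], rule exI[of _ "{}"]) auto
  then show ?thesis unfolding compact_open_def by auto
qed

lemma Xi_unbased:
  assumes "d \<in> based_maps X x0 Y y0"
  shows "Xi U d \<in> unbased_maps_into U X x0 Y y0"
  unfolding unbased_maps_into_def Xi_def
proof (intro CollectI conjI)
  have "continuous_map U (compact_open X x0 Y y0) (\<lambda>u. d)"
    using assms by (simp add: topspace_co)
  then show "continuous_map U (compact_open X x0 Y y0) (\<lambda>u\<in>topspace U. d)"
    by (rule continuous_map_eq) auto
qed auto

lemma sharp_Xi_based:
  assumes "d \<in> based_maps X x0 Y y0" and y0: "y0 \<in> topspace Y"
  shows "sharp U X x0 y0 (Xi U d) \<in> based_maps (wr_space U X x0) None Y y0"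
proof -
  let ?D = "sharp U X x0 y0 (Xi U d)"
  have cd: "continuous_map X Y d" and d0: "d x0 = y0"
    using assms by (auto simp: based_maps_def)
  have cont: "continuous_map (wr_space U X x0) Y ?D"
    unfolding continuous_map_def
  proof (intro conjI allI impI)
    show "?D \<in> topspace (wr_space U X x0) \<rightarrow> topspace Y"
    proof
      fix z assume z: "z \<in> topspace (wr_space U X x0)"
      show "?D z \<in> topspace Y"
      proof (cases z)
        case None then show ?thesis using z y0 by (simp add: sharp_Xi)
      next
        case (Some p) then obtain u x where zz: "z = Some (u, x)" by (cases p) auto
        have e: "?D z = d x" using sharp_Xi[OF z, of y0 d] zz by simp
        have "x \<in> topspace X" using z zz Some_in_wr[of u x U X x0] by auto
        then show ?thesis unfolding e using cd by (auto simp: continuous_map_def)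
      qed
    qed
  next
    fix W assume W: "openin Y W"
    have H: "\<forall>p \<in> topspace (prod_topology U X). ?D (wr_quot x0 p) = d (snd p)"
    proof
      fix p assume p: "p \<in> topspace (prod_topology U X)"
      show "?D (wr_quot x0 p) = d (snd p)" by (rule sharp_Xi_quot[of p U X d x0 y0, OF p d0])
    qed
    have QT: "wr_quot x0 p \<in> topspace (wr_space U X x0)" if p: "p \<in> topspace (prod_topology U X)" for p
      unfolding topspace_wr by (rule insertI2, rule imageI, rule p)
    have sub: "{z \<in> topspace (wr_space U X x0). ?D z \<in> W} \<subseteq> insert None (wr_quot x0 ` topspace (prod_topology U X))"
    proof -
      have "{z \<in> topspace (wr_space U X x0). ?D z \<in> W} \<subseteq> topspace (wr_space U X x0)" by (rule Collect_restrict)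
      then show ?thesis by (simp only: topspace_wr)
    qed
    have eq: "{p \<in> topspace (prod_topology U X). wr_quot x0 p \<in> {z \<in> topspace (wr_space U X x0). ?D z \<in> W}}
        = {p \<in> topspace (prod_topology U X). (d \<circ> snd) p \<in> W}"
      using H QT by auto
    have op: "openin (prod_topology U X) {p \<in> topspace (prod_topology U X). (d \<circ> snd) p \<in> W}"
      by (rule openin_continuous_map_preimage[OF continuous_map_compose[OF continuous_map_snd cd] W])
    show "openin (wr_space U X x0) {z \<in> topspace (wr_space U X x0). ?D z \<in> W}"
      unfolding openin_wr
    proof (rule conjI)
      show "openin (prod_topology U X) {p \<in> topspace (prod_topology U X). wr_quot x0 p \<in> {z \<in> topspace (wr_space U X x0). ?D z \<in> W}}"
        unfolding eq by (rule op)
    qed (rule sub)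
  qed
  have "None \<in> topspace (wr_space U X x0)" unfolding topspace_wr by (rule insertI1)
  then have "?D None = y0" by (simp add: sharp_Xi)
  moreover have "?D \<in> extensional (topspace (wr_space U X x0))"
    unfolding sharp_def by (rule restrict_extensional)
  ultimately show ?thesis unfolding based_maps_def using cont by blast
qed

theorem lemma14p1:
  fixes X :: "'a topology" and x0 :: 'a and Y :: "'b topology" and y0 :: 'b
    and U :: "'c topology" and s :: nat
  assumes "x0 \<in> topspace X" and "y0 \<in> topspace Y"
    and "compact_space X" and "Hausdorff_space X"
  shows "free_hom (Xi U) ` filt X x0 Y y0 s \<subseteq> filt_U U X x0 Y y0 s"
proof
  fix W assume "W \<in> free_hom (Xi U) ` filt X x0 Y y0 s"
  then obtain V where V: "V \<in> filt X x0 Y y0 s" and W: "W = free_hom (Xi U) V" by blast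
  have kV: "Poly_Mapping.keys V \<subseteq> based_maps X x0 Y y0"
   and rV: "\<And>R. R \<in> Fsets X x0 (int s - 1) \<Longrightarrow> free_hom (\<lambda>d. restrict d R) V = 0"
    using V by (auto simp: filt_def)
  have kW: "Poly_Mapping.keys W \<subseteq> unbased_maps_into U X x0 Y y0"
  proof -
    have "Xi U ` Poly_Mapping.keys V \<subseteq> unbased_maps_into U X x0 Y y0" using kV by (auto intro: Xi_unbased)
    then show ?thesis using free_hom_keys[of "Xi U" V] unfolding W by (rule subset_trans[rotated])
  qed
  let ?D = "\<lambda>d. sharp U X x0 y0 (Xi U d)"
  have SW: "free_hom (sharp U X x0 y0) W = free_hom ?D V"
    unfolding W free_hom_comp by (simp add: comp_def)
  have kS: "Poly_Mapping.keys (free_hom ?D V) \<subseteq> based_maps (wr_space U X x0) None Y y0"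
  proof -
    have "?D ` Poly_Mapping.keys V \<subseteq> based_maps (wr_space U X x0) None Y y0"
      using kV by (auto intro: sharp_Xi_based[OF _ assms(2)])
    then show ?thesis using free_hom_keys[of ?D V] by (rule subset_trans[rotated])
  qed
  have rS: "free_hom (\<lambda>e. restrict e R) (free_hom ?D V) = 0"
    if R: "R \<in> Fsets (wr_space U X x0) None (int s - 1)" for R
  proof -
    define f where "f = (\<lambda>z::('c \<times> 'a) option. case z of None \<Rightarrow> x0 | Some p \<Rightarrow> snd p)"
    define R' where "R' = f ` R"
    define G where "G = (\<lambda>e::'a \<Rightarrow> 'b. \<lambda>z\<in>R. case z of None \<Rightarrow> y0 | Some (u, x) \<Rightarrow> (e x :: 'b))"
    have Rs: "finite R" "R \<subseteq> topspace (wr_space U X x0)" "None \<in> R" "int (card R) \<le> int s"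
      using R by (auto simp: Fsets_def)
    have "R' \<subseteq> topspace X"
    proof
      fix x assume "x \<in> R'"
      then obtain z where z: "z \<in> R" "x = f z" by (auto simp: R'_def)
      show "x \<in> topspace X"
      proof (cases z)
        case None then show ?thesis using z assms(1) by (simp add: f_def)
      next
        case (Some p) then obtain u y where "z = Some (u, y)" by (cases p) auto
        then show ?thesis using z Rs(2) Some_in_wr[of u y U X x0] by (auto simp: f_def)
      qed
    qed
    moreover have "card R' \<le> card R" unfolding R'_def by (rule card_image_le[OF Rs(1)])
    moreover have "x0 \<in> R'" using Rs(3) by (force simp: R'_def f_def)
    moreover have "finite R'" unfolding R'_def using Rs(1) by (rule finite_imageI)
    ultimately have R'F: "R' \<in> Fsets X x0 (int s - 1)"
      using Rs by (auto simp: Fsets_def)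
    have eq: "restrict (?D d) R = G (restrict d R')" for d
    proof
      fix z show "restrict (?D d) R z = G (restrict d R') z"
      proof (cases "z \<in> R")
        case True
        then have zt: "z \<in> topspace (wr_space U X x0)" using Rs(2) by auto
        show ?thesis
        proof (cases z)
          case None then show ?thesis using True zt by (simp add: G_def sharp_Xi)
        next
          case (Some p) then obtain u y where zz: "z = Some (u, y)" by (cases p) auto
          have "y \<in> R'" using True zz by (force simp: R'_def f_def)
          then show ?thesis using True zt zz by (simp add: G_def sharp_Xi)
        qed
      qed (simp add: G_def)
    qed
    have "free_hom (\<lambda>e. restrict e R) (free_hom ?D V) = free_hom (G \<circ> (\<lambda>d. restrict d R')) V"
      unfolding free_hom_comp by (simp add: comp_def eq)
    also have "\<dots> = free_hom G (free_hom (\<lambda>d. restrict d R') V)"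
      by (simp add: free_hom_comp)
    also have "\<dots> = 0" using rV[OF R'F] by simp
    finally show ?thesis .
  qed
  show "W \<in> filt_U U X x0 Y y0 s"
    using kW kS rS by (simp add: filt_U_def filt_def SW)
qed

end
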